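(* Let $n\ge r\ge1$, let $\mathcal{O}\subset\mathbb{R}^{n\times r}$ be an open set containing ${\rm St}(n,r)$, let $f:\mathcal{O}\to\mathbb{R}$ be continuously differentiable, and let $L_f$ be a Lipschitz constant of $f$ on ${\rm St}(n,r)$. Consider problem (P): $\min_{X\in\mathcal{S}_{+}^{n,r}}f(X)$, and suppose that, in the case $n>r>1$, each local minimizer of (P) has no zero rows. Then for every local minimizer $X^*$ of (P): 1. if $n=r$ or $n>r=1$, with $\kappa'>0$ a constant such that ${\rm dist}(Z,\mathcal{S}_{+}^{n,r})\le\kappa'{\rm dist}(Z,\mathbb{R}_{+}^{n\times r})$ for all $Z\in{\rm St}(n,r)$, there exists $\delta>0$ such that $f(X)-f(X^* )+\kappa'L_f\vartheta(X)\ge0$ for all $X\in{\rm St}(n,r)$ with $\|X-X^*\|_F\le\delta$; 2. if $n>r>1$, with $\kappa:=\frac{2.1\sqrt{r}[1+3r(n-r)]}{X^*_{i^*j^*}}$ ($X^*_{i^*j^*}$ the smallest nonzero entry of $X^*$), there exists $\delta>0$ such that for all $\epsilon\ge0$ and all $X\in\mathcal{F}_\epsilon:=\{X\in{\rm St}(n,r):\vartheta(X)=\epsilon\}$ with $\|X-X^*\|_F\le\delta$, $f(X)-f(X^* )+\kappa L_f\vartheta(X)\ge0$. Hence each local minimizer of (P) is a local minimizer of $\min_{X\in{\rm St}(n,r)}\{f(X)+\rho\vartheta(X)\}$ for every $\rho\ge\max(\kappa',\kappa)L_f$, and conversely, for any $\rho>0$, each local minimizer of $\min_{X\in{\rm St}(n,r)}\{f(X)+\rho\vartheta(X)\}$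 that is entrywise nonnegative is a local minimizer of (P).
   Context: ${\rm St}(n,r):=\{X\in\mathbb{R}^{n\times r}: X^\top X=I_r\}$, $\mathbb{R}_{+}^{n\times r}$ the entrywise nonnegative matrices, $\mathcal{S}_{+}^{n,r}:=\mathbb{R}_{+}^{n\times r}\cap{\rm St}(n,r)$, ${\rm dist}$ the Frobenius-norm distance, and $\vartheta(X):=\sum_{i,j}\max(0,-X_{ij})$. *)

theory Defs
  imports "HOL-Analysis.Analysis"
begin

text \<open>Matrices in R^{n x r} are represented as real^'r^'n: X $ i $ j is the (i,j) entry,
  rows indexed by 'n (n = CARD('n)), columns by 'r (r = CARD('r)).
  The norm on this type is the Frobenius norm.\<close>

definition Stiefel :: "(real^'r^'n) set" where
  "Stiefel = {X. transpose X ** X = mat 1}"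

definition nonneg_mats :: "(real^'r^'n) set" where
  "nonneg_mats = {X. \<forall>i j. 0 \<le> X $ i $ j}"

definition nonneg_Stiefel :: "(real^'r^'n) set" where
  "nonneg_Stiefel = nonneg_mats \<inter> Stiefel"

definition vartheta :: "real^'r^'n \<Rightarrow> real" where
  "vartheta X = (\<Sum>i\<in>UNIV. \<Sum>j\<in>UNIV. max 0 (- (X $ i $ j)))"

definition local_min_P :: "(real^'r^'n \<Rightarrow> real) \<Rightarrow> real^'r^'n \<Rightarrow> bool" where
  "local_min_P f X \<longleftrightarrow> X \<in> nonneg_Stiefel \<and>
     (\<exists>\<delta>>0. \<forall>Y\<in>nonneg_Stiefel. norm (Y - X) < \<delta> \<longrightarrow> f X \<le> f Y)"

definition local_min_pen :: "(real^'r^'n \<Rightarrow> real) \<Rightarrow> real \<Rightarrow> real^'r^'n \<Rightarrow> bool" where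
  "local_min_pen f \<rho> X \<longleftrightarrow> X \<in> Stiefel \<and>
     (\<exists>\<delta>>0. \<forall>Y\<in>Stiefel. norm (Y - X) < \<delta> \<longrightarrow> f X + \<rho> * vartheta X \<le> f Y + \<rho> * vartheta Y)"

definition has_zero_row :: "real^'r^'n \<Rightarrow> bool" where
  "has_zero_row X \<longleftrightarrow> (\<exists>i. \<forall>j. X $ i $ j = 0)"

definition min_nonzero_entry :: "real^'r^'n \<Rightarrow> real" where
  "min_nonzero_entry X = Min {X $ i $ j | i j. X $ i $ j \<noteq> 0}"

end

theory Submission
  imports Defs
begin


lemma norm_l1_mat: "norm (X::real^'r^'n) \<le> (\<Sum>i\<in>UNIV. \<Sum>j\<in>UNIV. \<bar>X$i$j\<bar>)"
proof -
  have "norm X \<le> (\<Sum>i\<in>UNIV. norm (X$i))" unfolding norm_vec_def by (rule L2_set_le_sum) simp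
  also have "\<dots> \<le> (\<Sum>i\<in>UNIV. \<Sum>j\<in>UNIV. \<bar>X$i$j\<bar>)"
    by (rule sum_mono) (rule norm_le_l1_cart)
  finally show ?thesis .
qed

lemma entry_le_norm: "\<bar>(X::real^'r^'n)$i$j\<bar> \<le> norm X"
  using component_le_norm_cart[of "X$i" j] Finite_Cartesian_Product.norm_nth_le[of X i] by linarith

lemma Stiefel_iff: "(X::real^'r^'n) \<in> Stiefel \<longleftrightarrow>
   (\<forall>j k. (\<Sum>i\<in>UNIV. X$i$j * X$i$k) = (if j = k then 1 else 0))"
  by (auto simp: Stiefel_def vec_eq_iff matrix_matrix_mult_def transpose_def mat_def)

lemma Stiefel_col: "(X::real^'r^'n) \<in> Stiefel \<Longrightarrow> (\<Sum>i\<in>UNIV. (X$i$j)^2) = 1"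
  using Stiefel_iff[of X] by (auto simp: power2_eq_square)

lemma Stiefel_entry_le1: assumes "(X::real^'r^'n) \<in> Stiefel" shows "\<bar>X$i$j\<bar> \<le> 1"
proof -
  have "(X$i$j)^2 \<le> (\<Sum>i\<in>UNIV. (X$i$j)^2)"
    by (rule member_le_sum) auto
  then have "(X$i$j)^2 \<le> 1" using Stiefel_col[OF assms] by simp
  then show ?thesis by (simp add: abs_square_le_1)
qed

lemma closed_Stiefel: "closed (Stiefel :: (real^'r^'n) set)"
proof -
  have "Stiefel = {X::real^'r^'n. \<forall>j. \<forall>k. (\<Sum>i\<in>UNIV. X$i$j * X$i$k) = (if j = k then 1 else 0)}"
    using Stiefel_iff by blast
  also have "closed \<dots>"
    by (intro closed_Collect_all closed_Collect_eq continuous_intros)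
  finally show ?thesis .
qed

lemma closed_nonneg_mats: "closed (nonneg_mats :: (real^'r^'n) set)"
proof -
  have "nonneg_mats = {X::real^'r^'n. \<forall>i. \<forall>j. 0 \<le> X$i$j}"
    by (simp add: nonneg_mats_def)
  also have "closed \<dots>"
    by (intro closed_Collect_all closed_Collect_le continuous_intros)
  finally show ?thesis .
qed

lemma infdist_nonneg_le_vartheta: "infdist (Z::real^'r^'n) nonneg_mats \<le> vartheta Z"
proof -
  define W :: "real^'r^'n" where "W = (\<chi> i j. max 0 (Z$i$j))"
  have W: "W \<in> nonneg_mats" by (simp add: W_def nonneg_mats_def)
  have "infdist Z nonneg_mats \<le> dist Z W" by (rule infdist_le[OF W])
  also have "\<dots> = norm (Z - W)" by (simp add: dist_norm)
  also have "\<dots> \<le> (\<Sum>i\<in>UNIV. \<Sum>j\<in>UNIV. \<bar>(Z - W)$i$j\<bar>)" by (rule norm_l1_mat)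
  also have "\<dots> = vartheta Z"
    unfolding vartheta_def W_def
    by (intro sum.cong refl) auto
  finally show ?thesis .
qed

lemma vartheta_nonneg: "0 \<le> vartheta (X::real^'r^'n)"
  unfolding vartheta_def by (intro sum_nonneg) auto

lemma vartheta_zero: "(X::real^'r^'n) \<in> nonneg_mats \<Longrightarrow> vartheta X = 0"
  unfolding vartheta_def nonneg_mats_def by simp

lemma pen_from_bound:
  fixes f :: "real^'r^'n \<Rightarrow> real"
  assumes Xs: "Xs \<in> nonneg_Stiefel" and d: "\<delta> > 0"
    and B: "\<forall>X\<in>Stiefel. norm (X - Xs) \<le> \<delta> \<longrightarrow> f X - f Xs + c * L * vartheta X \<ge> 0"
  shows "\<forall>\<rho>\<ge>c * L. local_min_pen f \<rho> Xs"
proof (intro allI impI)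
  fix \<rho> assume r: "\<rho> \<ge> c * L"
  have v0: "vartheta Xs = 0" using Xs by (simp add: nonneg_Stiefel_def vartheta_zero)
  show "local_min_pen f \<rho> Xs"
    unfolding local_min_pen_def
  proof (intro conjI exI[of _ \<delta>] ballI impI)
    show "Xs \<in> Stiefel" using Xs by (simp add: nonneg_Stiefel_def)
    show "\<delta> > 0" by fact
    fix Y assume Y: "Y \<in> Stiefel" "norm (Y - Xs) < \<delta>"
    have "f Y - f Xs + c * L * vartheta Y \<ge> 0" using B Y by auto
    moreover have "c * L * vartheta Y \<le> \<rho> * vartheta Y"
      using r vartheta_nonneg[of Y] by (simp add: mult_right_mono)
    ultimately show "f Xs + \<rho> * vartheta Xs \<le> f Y + \<rho> * vartheta Y" using v0 by simp
  qed
qed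

lemma part3:
  fixes f :: "real^'r^'n \<Rightarrow> real"
  assumes "local_min_pen f \<rho> X" "X \<in> nonneg_mats"
  shows "local_min_P f X"
proof -
  obtain \<delta> where d: "\<delta> > 0" "\<forall>Y\<in>Stiefel. norm (Y - X) < \<delta> \<longrightarrow> f X + \<rho> * vartheta X \<le> f Y + \<rho> * vartheta Y"
    and XS: "X \<in> Stiefel" using assms(1) unfolding local_min_pen_def by blast
  show ?thesis unfolding local_min_P_def
  proof (intro conjI exI[of _ \<delta>] ballI impI)
    show "X \<in> nonneg_Stiefel" using XS assms(2) by (simp add: nonneg_Stiefel_def)
    show "\<delta> > 0" by fact
    fix Y assume Y: "Y \<in> nonneg_Stiefel" "norm (Y - X) < \<delta>"
    then show "f X \<le> f Y" using d(2) vartheta_zero[OF assms(2)] vartheta_zero[of Y]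
      by (auto simp: nonneg_Stiefel_def)
  qed
qed

lemma part1:
  fixes f :: "real^'r^'n \<Rightarrow> real"
  assumes Lf: "L-lipschitz_on Stiefel f" and Xs: "local_min_P f Xs" and k: "k > 0"
    and H: "\<forall>Z::real^'r^'n\<in>Stiefel. infdist Z nonneg_Stiefel \<le> k * infdist Z nonneg_mats"
  shows "(\<exists>\<delta>>0. \<forall>X\<in>Stiefel. norm (X - Xs) \<le> \<delta> \<longrightarrow> f X - f Xs + k * L * vartheta X \<ge> 0)
         \<and> (\<forall>\<rho>\<ge>k * L. local_min_pen f \<rho> Xs)"
proof -
  obtain d0 where d0: "d0 > 0" "\<forall>Y\<in>nonneg_Stiefel. norm (Y - Xs) < d0 \<longrightarrow> f Xs \<le> f Y"
    and XsS: "Xs \<in> nonneg_Stiefel" using Xs unfolding local_min_P_def by blast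
  have L0: "L \<ge> 0" using Lf by (simp add: lipschitz_on_def)
  have cl: "closed (nonneg_Stiefel :: (real^'r^'n) set)"
    unfolding nonneg_Stiefel_def by (intro closed_Int closed_nonneg_mats closed_Stiefel)
  have B: "\<forall>X\<in>Stiefel. norm (X - Xs) \<le> d0/3 \<longrightarrow> f X - f Xs + k * L * vartheta X \<ge> 0"
  proof (intro ballI impI)
    fix X :: "real^'r^'n" assume X: "X \<in> Stiefel" "norm (X - Xs) \<le> d0/3"
    obtain Y where Y: "Y \<in> nonneg_Stiefel" "infdist X nonneg_Stiefel = dist X Y"
      using infdist_attains_inf[OF cl, of X] XsS by blast
    have "dist X Y \<le> dist X Xs" using Y infdist_le[OF XsS, of X] by simp
    then have "norm (Y - Xs) \<le> 2 * norm (X - Xs)"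
      using norm_triangle_ineq[of "Y - X" "X - Xs"] by (simp add: dist_norm norm_minus_commute)
    then have "norm (Y - Xs) < d0" using X d0 by simp
    then have fY: "f Xs \<le> f Y" using d0 Y by blast
    have YS: "Y \<in> Stiefel" using Y by (simp add: nonneg_Stiefel_def)
    have "dist (f X) (f Y) \<le> L * dist X Y" using Lf X(1) YS by (simp add: lipschitz_on_def)
    then have "f Y - f X \<le> L * dist X Y" by (simp add: dist_real_def)
    moreover have "dist X Y \<le> k * vartheta X"
      using Y H X(1) infdist_nonneg_le_vartheta[of X] k
      by (metis mult_left_mono order.trans less_imp_le)
    ultimately have "f Y - f X \<le> k * L * vartheta X"
      using L0 by (smt (verit) mult.assoc mult.commute mult_left_mono)
    then show "f X - f Xs + k * L * vartheta X \<ge> 0" using fY by simp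
  qed
  show ?thesis
    using B pen_from_bound[OF XsS _ B] d0 by (intro conjI exI[of _ "d0/3"]) auto
qed



lemma sum_delta_inner:
  fixes c :: real
  shows "(\<Sum>k\<in>(UNIV::'r::finite set). if k = g then c else 0) = c"
  by simp

lemma sum_delta_outer:
  fixes h :: "'r::finite \<Rightarrow> real" and g :: "'r"
  shows "(\<Sum>j\<in>UNIV. \<Sum>k\<in>UNIV. if j = g then h k else 0) = (\<Sum>k\<in>UNIV. h k)"
proof -
  have "(\<Sum>j\<in>UNIV. \<Sum>k\<in>UNIV. if j = g then h k else 0) = (\<Sum>j\<in>UNIV. if j = g then (\<Sum>k\<in>UNIV. h k) else 0)"
    by (intro sum.cong) auto
  also have "\<dots> = (\<Sum>k\<in>UNIV. h k)" by (rule sum_delta_inner)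
  finally show ?thesis .
qed

lemma row_id:
  fixes a :: "'r::finite \<Rightarrow> real"
  shows "(\<Sum>j\<in>UNIV. \<Sum>k\<in>UNIV. if j \<noteq> k then a j * a k else 0) =
    2 * (a g * (\<Sum>j\<in>UNIV. if j \<noteq> g then a j else 0)) +
    (\<Sum>j\<in>UNIV. \<Sum>k\<in>UNIV. if j \<noteq> k \<and> j \<noteq> g \<and> k \<noteq> g then a j * a k else 0)"
proof -
  have pw: "\<And>j k. (if j \<noteq> k then a j * a k else 0) =
     (if j = g then (if k \<noteq> g then a g * a k else 0) else 0) +
     (if k = g then (if j \<noteq> g then a g * a j else 0) else 0) +
     (if j \<noteq> k \<and> j \<noteq> g \<and> k \<noteq> g then a j * a k else 0)"
    by auto
  have e1: "(\<Sum>j\<in>UNIV. \<Sum>k\<in>UNIV. if j = g then (if k \<noteq> g then a g * a k else 0) else 0)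
     = a g * (\<Sum>j\<in>UNIV. if j \<noteq> g then a j else 0)"
    unfolding sum_delta_outer by (simp add: sum_distrib_left if_distrib cong: if_cong)
  have e2: "(\<Sum>j\<in>UNIV. \<Sum>k\<in>UNIV. if k = g then (if j \<noteq> g then a g * a j else 0) else 0)
     = a g * (\<Sum>j\<in>UNIV. if j \<noteq> g then a j else 0)"
    unfolding sum_delta_inner by (simp add: sum_distrib_left if_distrib cong: if_cong)
  show ?thesis
    unfolding pw sum.distrib e1 e2 by simp
qed

lemma Stiefel_offdiag:
  assumes "(X::real^'r^'n) \<in> Stiefel"
  shows "(\<Sum>i\<in>UNIV. \<Sum>j\<in>UNIV. \<Sum>k\<in>UNIV. if j \<noteq> k then X$i$j * X$i$k else 0) = 0"
proof -
  have "(\<Sum>i\<in>UNIV. \<Sum>j\<in>UNIV. \<Sum>k\<in>UNIV. if j \<noteq> k then X$i$j * X$i$k else 0)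
     = (\<Sum>j\<in>UNIV. \<Sum>i\<in>UNIV. \<Sum>k\<in>UNIV. if j \<noteq> k then X$i$j * X$i$k else 0)"
    by (rule sum.swap)
  also have "\<dots> = (\<Sum>j\<in>UNIV. \<Sum>k\<in>UNIV. \<Sum>i\<in>UNIV. if j \<noteq> k then X$i$j * X$i$k else 0)"
    by (intro sum.cong refl) (rule sum.swap)
  also have "\<dots> = (\<Sum>j\<in>UNIV. \<Sum>k\<in>UNIV. if j \<noteq> k then (\<Sum>i\<in>UNIV. X$i$j * X$i$k) else 0)"
    by (intro sum.cong refl) auto
  also have "\<dots> = 0" using assms by (intro sum.neutral ballI) (auto simp: Stiefel_iff)
  finally show ?thesis .
qed



lemma aux_lin:
  fixes a x m d :: real
  assumes "m - d \<le> a" "a \<le> 1" "0 \<le> m - d"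
  shows "(m - d) * max 0 x - max 0 (- x) \<le> a * x"
proof (cases "x \<ge> 0")
  case True
  then have "(m - d) * x \<le> a * x" using assms by (simp add: mult_right_mono)
  then show ?thesis using True by simp
next
  case False
  have "(1 - a) * x \<le> 0" using assms False by (intro mult_nonneg_nonpos) auto
  then have "x \<le> a * x" by (simp add: algebra_simps)
  then show ?thesis using False by simp
qed

lemma abs_sum3:
  fixes f :: "'a \<Rightarrow> 'b \<Rightarrow> 'c \<Rightarrow> real"
  shows "\<bar>\<Sum>i\<in>A. \<Sum>j\<in>B. \<Sum>k\<in>C. f i j k\<bar> \<le> (\<Sum>i\<in>A. \<Sum>j\<in>B. \<Sum>k\<in>C. \<bar>f i j k\<bar>)"
proof -
  have "\<bar>\<Sum>i\<in>A. \<Sum>j\<in>B. \<Sum>k\<in>C. f i j k\<bar> \<le> (\<Sum>i\<in>A. \<bar>\<Sum>j\<in>B. \<Sum>k\<in>C. f i j k\<bar>)"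
    by (rule sum_abs)
  also have "\<dots> \<le> (\<Sum>i\<in>A. \<Sum>j\<in>B. \<bar>\<Sum>k\<in>C. f i j k\<bar>)"
    by (intro sum_mono sum_abs)
  also have "\<dots> \<le> (\<Sum>i\<in>A. \<Sum>j\<in>B. \<Sum>k\<in>C. \<bar>f i j k\<bar>)"
    by (intro sum_mono sum_abs)
  finally show ?thesis .
qed

lemma core_S:
  fixes X :: "real^'r^'n" and g :: "'n \<Rightarrow> 'r"
  assumes XS: "X \<in> Stiefel" and m: "0 < m" "m \<le> 1"
    and d: "0 < d" "d * (real CARD('r) + 1) \<le> m / 4"
    and pat: "\<And>i. X$i$(g i) \<ge> m - d" and off: "\<And>i j. j \<noteq> g i \<Longrightarrow> \<bar>X$i$j\<bar> \<le> d"
  shows "3 * m * (\<Sum>i\<in>UNIV. \<Sum>j\<in>UNIV. if j \<noteq> g i then \<bar>X$i$j\<bar> else 0) \<le> 8 * vartheta X"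
proof -
  define S where "S = (\<Sum>i\<in>UNIV. \<Sum>j\<in>UNIV. if j \<noteq> g i then \<bar>X$i$j\<bar> else 0)"
  define P where "P = (\<Sum>i\<in>UNIV. \<Sum>j\<in>UNIV. if j \<noteq> g i then max 0 (X$i$j) else 0)"
  define Q where "Q = (\<Sum>i\<in>UNIV. \<Sum>j\<in>UNIV. if j \<noteq> g i then max 0 (- X$i$j) else 0)"
  define T where "T = (\<Sum>i\<in>UNIV. X$i$(g i) * (\<Sum>j\<in>UNIV. if j \<noteq> g i then X$i$j else 0))"
  define R where "R = (\<Sum>i\<in>UNIV. \<Sum>j\<in>UNIV. \<Sum>k\<in>UNIV.
      if j \<noteq> k \<and> j \<noteq> g i \<and> k \<noteq> g i then X$i$j * X$i$k else 0)"
  let ?r = "real CARD('r)"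
  have "d * 1 \<le> d * (?r + 1)" using d by (intro mult_left_mono) auto
  then have dm: "d \<le> m / 4" using d by linarith
  have rd: "?r * d \<le> m / 4" using d by (simp add: algebra_simps)
  have S_eq: "S = P + Q"
  proof -
    have "S = (\<Sum>i\<in>UNIV. \<Sum>j\<in>UNIV. (if j \<noteq> g i then max 0 (X$i$j) else 0) + (if j \<noteq> g i then max 0 (- X$i$j) else 0))"
      unfolding S_def by (intro sum.cong refl) auto
    then show ?thesis by (simp add: P_def Q_def sum.distrib)
  qed
  have P0: "P \<ge> 0" unfolding P_def by (intro sum_nonneg) auto
  have Q0: "Q \<ge> 0" unfolding Q_def by (intro sum_nonneg) auto
  have Qv: "Q \<le> vartheta X" unfolding Q_def vartheta_def by (intro sum_mono) auto
  have TR: "2 * T + R = 0"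
  proof -
    have "(\<Sum>i\<in>UNIV. \<Sum>j\<in>UNIV. \<Sum>k\<in>UNIV. if j \<noteq> k then X$i$j * X$i$k else 0)
       = (\<Sum>i\<in>UNIV. 2 * (X$i$(g i) * (\<Sum>j\<in>UNIV. if j \<noteq> g i then X$i$j else 0)) +
          (\<Sum>j\<in>UNIV. \<Sum>k\<in>UNIV. if j \<noteq> k \<and> j \<noteq> g i \<and> k \<noteq> g i then X$i$j * X$i$k else 0))"
    proof (intro sum.cong refl)
      fix i show "(\<Sum>j\<in>UNIV. \<Sum>k\<in>UNIV. if j \<noteq> k then X$i$j * X$i$k else 0) =
          2 * (X$i$(g i) * (\<Sum>j\<in>UNIV. if j \<noteq> g i then X$i$j else 0)) +
          (\<Sum>j\<in>UNIV. \<Sum>k\<in>UNIV. if j \<noteq> k \<and> j \<noteq> g i \<and> k \<noteq> g i then X$i$j * X$i$k else 0)"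
        using row_id[of "\<lambda>j. X$i$j" "g i"] by simp
    qed
    also have "\<dots> = 2 * T + R" by (simp add: T_def R_def sum.distrib sum_distrib_left)
    finally show ?thesis using Stiefel_offdiag[OF XS] by simp
  qed
  have Tlow: "(m - d) * P - Q \<le> T"
  proof -
    have "(m - d) * P - Q = (\<Sum>i\<in>UNIV. \<Sum>j\<in>UNIV. (m - d) * (if j \<noteq> g i then max 0 (X$i$j) else 0)
         - (if j \<noteq> g i then max 0 (- X$i$j) else 0))"
      by (simp add: P_def Q_def sum_distrib_left sum_subtractf)
    also have "\<dots> \<le> (\<Sum>i\<in>UNIV. \<Sum>j\<in>UNIV. X$i$(g i) * (if j \<noteq> g i then X$i$j else 0))"
    proof (intro sum_mono)
      fix i j
      have a1: "X$i$(g i) \<le> 1" using Stiefel_entry_le1[OF XS, of i "g i"] by simp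
      show "(m - d) * (if j \<noteq> g i then max 0 (X$i$j) else 0) - (if j \<noteq> g i then max 0 (- X$i$j) else 0)
          \<le> X$i$(g i) * (if j \<noteq> g i then X$i$j else 0)"
        using aux_lin[OF pat[of i] a1, of "X$i$j"] dm m by auto
    qed
    also have "\<dots> = T" by (simp add: T_def sum_distrib_left)
    finally show ?thesis .
  qed
  have Rb: "\<bar>R\<bar> \<le> ?r * d * S"
  proof -
    have "\<bar>R\<bar> \<le> (\<Sum>i\<in>UNIV. \<Sum>j\<in>UNIV. \<Sum>k\<in>UNIV.
      \<bar>if j \<noteq> k \<and> j \<noteq> g i \<and> k \<noteq> g i then X$i$j * X$i$k else 0\<bar>)"
      unfolding R_def by (rule abs_sum3)
    also have "\<dots> \<le> (\<Sum>i\<in>UNIV. \<Sum>j\<in>UNIV. \<Sum>k\<in>(UNIV::'r set). (if j \<noteq> g i then \<bar>X$i$j\<bar> else 0) * d)"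
    proof (intro sum_mono)
      fix i j k
      show "\<bar>if j \<noteq> k \<and> j \<noteq> g i \<and> k \<noteq> g i then X$i$j * X$i$k else 0\<bar>
          \<le> (if j \<noteq> g i then \<bar>X$i$j\<bar> else 0) * d"
      proof (cases "j \<noteq> k \<and> j \<noteq> g i \<and> k \<noteq> g i")
        case True
        then have "\<bar>X$i$k\<bar> \<le> d" using off by auto
        then show ?thesis using True by (simp add: abs_mult mult_left_mono)
      next
        case False
        then show ?thesis using d by auto
      qed
    qed
    also have "\<dots> = ?r * d * S" by (simp add: S_def sum_distrib_left sum_distrib_right algebra_simps)
    finally show ?thesis .
  qed
  have "(m - d) * P - Q \<le> ?r * d * (P + Q)"
  proof -
    have "0 \<le> ?r * d * S" using S_eq P0 Q0 d by simp
    then show ?thesis unfolding S_eq[symmetric] using Tlow TR Rb abs_ge_minus_self[of R] by linarith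
  qed
  then have "(m - d - ?r * d) * P \<le> (1 + ?r * d) * Q" by (simp add: algebra_simps)
  moreover have "(3 * m / 4) * P \<le> (m - d - ?r * d) * P"
    using d P0 by (intro mult_right_mono) (auto simp: algebra_simps)
  moreover have "(1 + ?r * d) * Q \<le> (5/4) * Q"
    using rd m Q0 by (intro mult_right_mono) auto
  ultimately have "3 * m * P \<le> 5 * Q" by linarith
  moreover have "m * Q \<le> 1 * Q" using m Q0 by (intro mult_right_mono) auto
  then have "3 * m * Q \<le> 3 * Q" by simp
  ultimately have "3 * m * S \<le> 8 * Q" using S_eq by (simp add: algebra_simps)
  then show ?thesis using Qv unfolding S_def by linarith
qed



lemma core_Z:
  fixes X :: "real^'r^'n" and g :: "'n \<Rightarrow> 'r"
  assumes XS: "X \<in> Stiefel" and m: "0 < m" "m \<le> 1"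
    and d: "0 < d" "d \<le> m / 2" "2 * real CARD('n) * d \<le> m"
    and pat: "\<And>i. X$i$(g i) \<ge> m - d" and off: "\<And>i j. j \<noteq> g i \<Longrightarrow> \<bar>X$i$j\<bar> \<le> d"
    and sg: "\<And>j. \<exists>i. g i = j"
  shows "\<exists>Z\<in>nonneg_Stiefel. norm (X - Z) \<le> 2 * (\<Sum>i\<in>UNIV. \<Sum>j\<in>UNIV. if j \<noteq> g i then \<bar>X$i$j\<bar> else 0)"
proof -
  define S where "S = (\<Sum>i\<in>UNIV. \<Sum>j\<in>UNIV. if j \<noteq> g i then \<bar>X$i$j\<bar> else 0)"
  define s where "s j = (\<Sum>i\<in>UNIV. if j = g i then (X$i$j)^2 else 0)" for j
  define c where "c j = sqrt (s j)" for j
  define offsq where "offsq j = (\<Sum>i\<in>UNIV. if j = g i then 0 else (X$i$j)^2)" for j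
  have S0: "S \<ge> 0" unfolding S_def by (intro sum_nonneg) auto
  have s0: "s j \<ge> 0" for j unfolding s_def by (intro sum_nonneg) auto
  have offsq0: "offsq j \<ge> 0" for j unfolding offsq_def by (intro sum_nonneg) auto
  have sO: "s j + offsq j = 1" for j
  proof -
    have "s j + offsq j = (\<Sum>i\<in>UNIV. (X$i$j)^2)"
      unfolding s_def offsq_def sum.distrib[symmetric] by (intro sum.cong) auto
    then show ?thesis using Stiefel_col[OF XS] by simp
  qed
  have c2: "(c j)^2 = s j" for j unfolding c_def using s0 by simp
  have cm: "c j \<ge> m / 2" for j
  proof -
    obtain i0 where i0: "g i0 = j" using sg by blast
    have "(X$i0$j)^2 \<le> s j" unfolding s_def
      using member_le_sum[of i0 UNIV "\<lambda>i. if j = g i then (X$i$j)^2 else 0"] i0 by auto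
    then have "X$i0$j \<le> c j" unfolding c_def by (rule real_le_rsqrt)
    moreover have "X$i0$j \<ge> m - d" using pat[of i0] i0 by simp
    ultimately show ?thesis using d by linarith
  qed
  have cpos: "c j > 0" for j using cm[of j] m by linarith
  have c1: "\<bar>1 - 1 / c j\<bar> \<le> 2 * offsq j / m" for j
  proof -
    let ?c = "c j"
    have "\<bar>?c - 1\<bar> * (?c + 1) = \<bar>(?c - 1) * (?c + 1)\<bar>"
      using cpos[of j] by (simp add: abs_mult)
    also have "\<dots> = \<bar>?c^2 - 1\<bar>" by (simp add: power2_eq_square algebra_simps)
    also have "\<dots> = offsq j" unfolding c2[of j] using sO[of j] offsq0[of j] by arith
    finally have e: "\<bar>?c - 1\<bar> * (?c + 1) = offsq j" .
    have "\<bar>?c - 1\<bar> * 1 \<le> \<bar>?c - 1\<bar> * (?c + 1)" using cpos[of j] by (intro mult_left_mono) auto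
    then have a: "\<bar>?c - 1\<bar> \<le> offsq j" using e by simp
    have "\<bar>1 - 1 / ?c\<bar> = \<bar>?c - 1\<bar> / ?c" using cpos[of j] by (simp add: field_simps abs_div abs_minus_commute)
    also have "\<dots> \<le> offsq j / ?c" using a cpos[of j] by (simp add: divide_right_mono)
    also have "\<dots> \<le> offsq j / (m / 2)" using offsq0[of j] cm[of j] m by (intro divide_left_mono) auto
    also have "\<dots> = 2 * offsq j / m" by simp
    finally show ?thesis .
  qed
  have Ob: "offsq j \<le> d * (\<Sum>i\<in>UNIV. if j \<noteq> g i then \<bar>X$i$j\<bar> else 0)" for j
    unfolding offsq_def sum_distrib_left
  proof (intro sum_mono)
    fix i show "(if j = g i then 0 else (X$i$j)^2) \<le> d * (if j \<noteq> g i then \<bar>X$i$j\<bar> else 0)"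
    proof (cases "j = g i")
      case False
      then have "\<bar>X$i$j\<bar> * \<bar>X$i$j\<bar> \<le> d * \<bar>X$i$j\<bar>" using off[of j i] by (intro mult_right_mono) auto
      then show ?thesis using False by (simp add: power2_eq_square abs_mult[symmetric])
    qed simp
  qed
  have sumO: "(\<Sum>j\<in>UNIV. offsq j) \<le> d * S"
  proof -
    have "(\<Sum>j\<in>UNIV. offsq j) \<le> (\<Sum>j\<in>UNIV. d * (\<Sum>i\<in>UNIV. if j \<noteq> g i then \<bar>X$i$j\<bar> else 0))"
      by (intro sum_mono Ob)
    also have "\<dots> = d * S" unfolding S_def sum_distrib_left[symmetric] by (rule arg_cong[where f="(*) d"], rule sum.swap)
    finally show ?thesis .
  qed
  define Z :: "real^'r^'n" where "Z = (\<chi> i j. if j = g i then X$i$j / c j else 0)"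
  have Zn: "Z \<in> nonneg_mats"
    unfolding nonneg_mats_def Z_def
  proof (intro CollectI allI)
    fix i j
    show "0 \<le> (\<chi> i j. if j = g i then X$i$j / c j else 0) $ i $ j"
      using pat[of i] d cpos[of j] by auto
  qed
  have ZS: "Z \<in> Stiefel"
    unfolding Stiefel_iff
  proof (intro allI)
    fix j k
    show "(\<Sum>i\<in>UNIV. Z$i$j * Z$i$k) = (if j = k then 1 else 0)"
    proof (cases "j = k")
      case True
      have "(\<Sum>i\<in>UNIV. Z$i$j * Z$i$k) = (\<Sum>i\<in>UNIV. (if j = g i then (X$i$j)^2 else 0) / (c j)^2)"
        unfolding Z_def using True by (intro sum.cong) (auto simp: power2_eq_square)
      also have "\<dots> = s j / (c j)^2" unfolding s_def sum_divide_distrib by simp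
      also have "\<dots> = 1" using c2[of j] cpos[of j] by (metis divide_self less_numeral_extra(3) power_not_zero)
      finally show ?thesis using True by simp
    next
      case False
      then show ?thesis unfolding Z_def by (intro trans[OF sum.neutral]) auto
    qed
  qed
  have "norm (X - Z) \<le> (\<Sum>i\<in>UNIV. \<Sum>j\<in>UNIV. \<bar>(X - Z)$i$j\<bar>)" by (rule norm_l1_mat)
  also have "\<dots> \<le> (\<Sum>i\<in>UNIV. \<Sum>j\<in>UNIV. (if j \<noteq> g i then \<bar>X$i$j\<bar> else 0) + (if j = g i then 2 * d * S / m else 0))"
  proof (intro sum_mono)
    fix i j
    show "\<bar>(X - Z)$i$j\<bar> \<le> (if j \<noteq> g i then \<bar>X$i$j\<bar> else 0) + (if j = g i then 2 * d * S / m else 0)"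
    proof (cases "j = g i")
      case True
      have "\<bar>(X - Z)$i$j\<bar> = \<bar>X$i$j\<bar> * \<bar>1 - 1 / c j\<bar>"
        unfolding Z_def using True by (simp add: abs_mult[symmetric] algebra_simps)
      also have "\<dots> \<le> 1 * (2 * offsq j / m)"
        using Stiefel_entry_le1[OF XS, of i j] c1[of j] by (intro mult_mono) auto
      also have "\<dots> \<le> 2 * (\<Sum>j\<in>UNIV. offsq j) / m"
        using member_le_sum[of j UNIV offsq] offsq0 m by (simp add: divide_right_mono)
      also have "\<dots> \<le> 2 * (d * S) / m"
        using sumO m by (simp add: divide_right_mono)
      finally show ?thesis using True by simp
    next
      case False
      then show ?thesis unfolding Z_def by simp
    qed
  qed
  also have "\<dots> = S + real CARD('n) * (2 * d * S / m)"
    unfolding sum.distrib S_def by simp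
  also have "\<dots> \<le> 2 * S"
  proof -
    have "real CARD('n) * (2 * d * S / m) = (2 * real CARD('n) * d) * S / m" by simp
    also have "\<dots> \<le> m * S / m" using d S0 m by (intro divide_right_mono mult_right_mono) auto
    also have "\<dots> = S" using m by simp
    finally show ?thesis by simp
  qed
  finally show ?thesis using Zn ZS unfolding S_def nonneg_Stiefel_def by blast
qed



lemma Xs_struct:
  fixes Xs :: "real^'r^'n"
  assumes XsS: "Xs \<in> nonneg_Stiefel" and nz: "\<not> has_zero_row Xs"
  shows "\<exists>g::'n \<Rightarrow> 'r. (\<forall>i. Xs$i$(g i) > 0) \<and> (\<forall>i j. j \<noteq> g i \<longrightarrow> Xs$i$j = 0) \<and> (\<forall>j. \<exists>i. g i = j)"
proof -
  have St: "Xs \<in> Stiefel" and nn: "\<And>i j. 0 \<le> Xs$i$j"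
    using XsS by (auto simp: nonneg_Stiefel_def nonneg_mats_def)
  have disj: "Xs$i$j = 0 \<or> Xs$i$k = 0" if "j \<noteq> k" for i j k
  proof -
    have "(\<Sum>i\<in>UNIV. Xs$i$j * Xs$i$k) = 0" using St that by (simp add: Stiefel_iff)
    moreover have "\<forall>i\<in>UNIV. 0 \<le> Xs$i$j * Xs$i$k" using nn by simp
    ultimately have "Xs$i$j * Xs$i$k = 0" using sum_nonneg_eq_0_iff[of UNIV "\<lambda>i. Xs$i$j * Xs$i$k"] by simp
    then show ?thesis by simp
  qed
  define g where "g i = (SOME j. Xs$i$j \<noteq> 0)" for i
  have g1: "Xs$i$(g i) \<noteq> 0" for i
    using nz unfolding has_zero_row_def g_def by (metis (mono_tags, lifting) someI_ex)
  have g2: "Xs$i$(g i) > 0" for i using g1[of i] nn[of i "g i"] by simp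
  have g3: "Xs$i$j = 0" if "j \<noteq> g i" for i j using disj[OF that, of i] g1[of i] by simp
  have g4: "\<exists>i. g i = j" for j
  proof (rule ccontr)
    assume "\<nexists>i. g i = j"
    then have "\<forall>i. Xs$i$j = 0" using g3 by metis
    then show False using Stiefel_col[OF St, of j] by simp
  qed
  show ?thesis using g2 g3 g4 by blast
qed

lemma min_entry_facts:
  fixes Xs :: "real^'r^'n"
  assumes XsS: "Xs \<in> nonneg_Stiefel"
  shows "0 < min_nonzero_entry Xs" "\<And>i j. Xs$i$j \<noteq> 0 \<Longrightarrow> min_nonzero_entry Xs \<le> Xs$i$j"
    "min_nonzero_entry Xs \<le> 1"
proof -
  have St: "Xs \<in> Stiefel" and nn: "\<And>i j. 0 \<le> Xs$i$j"
    using XsS by (auto simp: nonneg_Stiefel_def nonneg_mats_def)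
  define A where "A = {Xs$i$j | i j. Xs$i$j \<noteq> 0}"
  have fin: "finite A"
  proof -
    have "A \<subseteq> (\<lambda>(i,j). Xs$i$j) ` UNIV" unfolding A_def by auto
    then show ?thesis by (rule finite_subset) simp
  qed
  obtain j0 :: 'r where True by simp
  have "\<exists>i. Xs$i$j0 \<noteq> 0"
  proof (rule ccontr)
    assume "\<not> ?thesis" then show False using Stiefel_col[OF St, of j0] by simp
  qed
  then obtain i0 where i0: "Xs$i0$j0 \<noteq> 0" by blast
  have ne: "A \<noteq> {}" using i0 unfolding A_def by blast
  have m_def': "min_nonzero_entry Xs = Min A" unfolding min_nonzero_entry_def A_def by simp
  have "Min A \<in> A" using Min_in[OF fin ne] .
  then obtain i j where "Min A = Xs$i$j" "Xs$i$j \<noteq> 0" unfolding A_def by blast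
  then show "0 < min_nonzero_entry Xs" unfolding m_def' using nn[of i j] by simp
  show le: "min_nonzero_entry Xs \<le> Xs$i$j" if "Xs$i$j \<noteq> 0" for i j
    unfolding m_def' using that fin by (intro Min_le) (auto simp: A_def)
  show "min_nonzero_entry Xs \<le> 1"
    using le[OF i0] Stiefel_entry_le1[OF St, of i0 j0] by simp
qed



lemma part2:
  fixes f :: "real^'r^'n \<Rightarrow> real"
  assumes Lf: "L-lipschitz_on Stiefel f" and Xs: "local_min_P f Xs" and nz: "\<not> has_zero_row Xs"
    and nr: "CARD('n) > CARD('r)"
  shows "let \<kappa> = (21/10) * sqrt (real CARD('r)) * (1 + 3 * real CARD('r) * (real CARD('n) - real CARD('r)))
                  / min_nonzero_entry Xs in
         (\<exists>\<delta>>0. \<forall>\<epsilon>\<ge>0. \<forall>X. X \<in> Stiefel \<and> vartheta X = \<epsilon> \<and> norm (X - Xs) \<le> \<delta> \<longrightarrow>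
              f X - f Xs + \<kappa> * L * vartheta X \<ge> 0)
         \<and> (\<forall>\<rho>\<ge>\<kappa> * L. local_min_pen f \<rho> Xs)"
proof -
  define \<kappa> where "\<kappa> = (21/10) * sqrt (real CARD('r)) * (1 + 3 * real CARD('r) * (real CARD('n) - real CARD('r)))
                  / min_nonzero_entry Xs"
  define m where "m = min_nonzero_entry Xs"
  let ?n = "real CARD('n)" and ?r = "real CARD('r)"
  obtain d0 where d0: "d0 > 0" "\<forall>Y\<in>nonneg_Stiefel. norm (Y - Xs) < d0 \<longrightarrow> f Xs \<le> f Y"
    and XsS: "Xs \<in> nonneg_Stiefel" using Xs unfolding local_min_P_def by blast
  have L0: "L \<ge> 0" using Lf by (simp add: lipschitz_on_def)
  obtain g :: "'n \<Rightarrow> 'r" where g1: "\<And>i. Xs$i$(g i) > 0" and g2: "\<And>i j. j \<noteq> g i \<Longrightarrow> Xs$i$j = 0"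
    and g3: "\<And>j. \<exists>i. g i = j" using Xs_struct[OF XsS nz] by blast
  have m0: "0 < m" and m1: "m \<le> 1" and mle: "\<And>i. m \<le> Xs$i$(g i)"
    using min_entry_facts[OF XsS] g1 unfolding m_def by (auto simp: less_imp_neq[symmetric])
  have n1: "?n \<ge> 1" and r1: "?r \<ge> 1" by (simp_all add: Suc_le_eq)
  have "1 \<le> ?n - ?r" using nr by linarith
  then have "?r * 1 \<le> ?r * (?n - ?r)" using r1 by (intro mult_left_mono) auto
  then have big: "4 \<le> 1 + 3 * ?r * (?n - ?r)" using r1 by linarith
  have sq: "1 \<le> sqrt ?r" using r1 by simp
  have "16/3 \<le> (21/10) * sqrt ?r * (1 + 3 * ?r * (?n - ?r))"
  proof -
    have "1 * 4 \<le> sqrt ?r * (1 + 3 * ?r * (?n - ?r))" using sq big by (intro mult_mono) auto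
    then show ?thesis by linarith
  qed
  then have "(16/3) / m \<le> (21/10) * sqrt ?r * (1 + 3 * ?r * (?n - ?r)) / m"
    using m0 by (intro divide_right_mono) auto
  then have kap: "16 / (3 * m) \<le> \<kappa>" unfolding \<kappa>_def m_def[symmetric] by simp
  define \<delta> where "\<delta> = min (min (m / (4 * (?r + 1))) (m / (4 * ?n))) (d0 / (2 * ?n * ?r + 2))"
  have "0 \<le> ?n * ?r" by simp
  then have den: "0 < 2 * ?n * ?r + 2" by linarith
  have dpos: "\<delta> > 0" unfolding \<delta>_def using m0 d0 den n1 r1 by auto
  have dA: "\<delta> * (?r + 1) \<le> m / 4"
  proof -
    have "\<delta> \<le> m / (4 * (?r + 1))" unfolding \<delta>_def by simp
    then show ?thesis by (simp add: field_simps)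
  qed
  have dB: "2 * ?n * \<delta> \<le> m"
  proof -
    have "\<delta> \<le> m / (4 * ?n)" unfolding \<delta>_def by simp
    then have "4 * ?n * \<delta> \<le> m" using n1 by (simp add: field_simps)
    moreover have "0 \<le> 2 * ?n * \<delta>" using dpos by simp
    ultimately show ?thesis by linarith
  qed
  have dC: "\<delta> * (2 * ?n * ?r + 2) \<le> d0"
  proof -
    have "\<delta> \<le> d0 / (2 * ?n * ?r + 2)" unfolding \<delta>_def by simp
    with den show ?thesis by (simp add: field_simps)
  qed
  have dm: "\<delta> \<le> m / 2"
  proof -
    have "\<delta> * 1 \<le> \<delta> * (?r + 1)" using dpos r1 by (intro mult_left_mono) auto
    then show ?thesis using dA m0 by linarith
  qed
  have B: "\<forall>X\<in>Stiefel. norm (X - Xs) \<le> \<delta> \<longrightarrow> f X - f Xs + \<kappa> * L * vartheta X \<ge> 0"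
  proof (intro ballI impI)
    fix X :: "real^'r^'n" assume XS: "X \<in> Stiefel" and Xd: "norm (X - Xs) \<le> \<delta>"
    have ent: "\<bar>X$i$j - Xs$i$j\<bar> \<le> \<delta>" for i j
      using entry_le_norm[of "X - Xs" i j] Xd by simp
    have pat: "X$i$(g i) \<ge> m - \<delta>" for i using ent[of i "g i"] mle[of i] by linarith
    have off: "\<bar>X$i$j\<bar> \<le> \<delta>" if "j \<noteq> g i" for i j using ent[of i j] g2[OF that] by simp
    define S where "S = (\<Sum>i\<in>UNIV. \<Sum>j\<in>UNIV. if j \<noteq> g i then \<bar>X$i$j\<bar> else 0)"
    obtain Z where Z: "Z \<in> nonneg_Stiefel" "norm (X - Z) \<le> 2 * S"
      using core_Z[OF XS m0 m1 dpos dm dB pat off g3] unfolding S_def by blast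
    have S3: "3 * m * S \<le> 8 * vartheta X"
      using core_S[OF XS m0 m1 dpos dA pat off] unfolding S_def .
    have Snr: "S \<le> ?n * ?r * \<delta>"
    proof -
      have "S \<le> (\<Sum>i\<in>(UNIV::'n set). \<Sum>j\<in>(UNIV::'r set). \<delta>)"
        unfolding S_def using off dpos by (intro sum_mono) auto
      then show ?thesis by simp
    qed
    have "norm (Z - Xs) \<le> norm (X - Z) + norm (X - Xs)"
      using norm_triangle_ineq[of "Z - X" "X - Xs"] by (simp add: norm_minus_commute)
    also have "\<dots> \<le> 2 * (?n * ?r * \<delta>) + \<delta>" using Z(2) Snr Xd by linarith
    also have "\<dots> < \<delta> * (2 * ?n * ?r + 2)" using dpos by (simp add: algebra_simps)
    finally have "norm (Z - Xs) < d0" using dC by linarith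
    then have fZ: "f Xs \<le> f Z" using d0 Z(1) by blast
    have ZS: "Z \<in> Stiefel" using Z(1) by (simp add: nonneg_Stiefel_def)
    have "dist (f X) (f Z) \<le> L * dist X Z" using Lf XS ZS by (simp add: lipschitz_on_def)
    then have "f Z - f X \<le> L * norm (X - Z)" by (simp add: dist_real_def dist_norm)
    also have "\<dots> \<le> L * (2 * S)" using Z(2) L0 by (intro mult_left_mono)
    also have "2 * S \<le> 16 / (3 * m) * vartheta X"
    proof -
      have "2 * S = 2 * (3 * m * S) / (3 * m)" using m0 by simp
      also have "\<dots> \<le> 2 * (8 * vartheta X) / (3 * m)" using S3 m0 by (intro divide_right_mono) (auto simp: algebra_simps)
      finally show ?thesis by simp
    qed
    then have "L * (2 * S) \<le> L * (16 / (3 * m) * vartheta X)" using L0 by (intro mult_left_mono)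
    also have "\<dots> \<le> L * (\<kappa> * vartheta X)"
      using kap vartheta_nonneg[of X] L0 by (intro mult_left_mono mult_right_mono) auto
    finally have "f Z - f X \<le> \<kappa> * L * vartheta X" by (simp add: algebra_simps)
    then show "f X - f Xs + \<kappa> * L * vartheta X \<ge> 0" using fZ by simp
  qed
  have "\<exists>\<delta>>0. \<forall>\<epsilon>\<ge>0. \<forall>X. X \<in> Stiefel \<and> vartheta X = \<epsilon> \<and> norm (X - Xs) \<le> \<delta> \<longrightarrow>
              f X - f Xs + \<kappa> * L * vartheta X \<ge> 0"
    using B dpos by blast
  moreover have "\<forall>\<rho>\<ge>\<kappa> * L. local_min_pen f \<rho> Xs" by (rule pen_from_bound[OF XsS dpos B])
  ultimately show ?thesis unfolding \<kappa>_def Let_def by blast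
qed


theorem corollary3p7:
  fixes f :: "real^'r^'n \<Rightarrow> real" and Om :: "(real^'r^'n) set" and L :: real
  assumes dims: "CARD('r) \<le> CARD('n)"
    and O_open: "open Om" and St_sub: "Stiefel \<subseteq> Om"
    and f_C1: "\<exists>f'. (\<forall>x\<in>Om. (f has_derivative blinfun_apply (f' x)) (at x)) \<and> continuous_on Om f'"
    and Lf: "L-lipschitz_on Stiefel f"
    and no_zero_rows: "CARD('n) > CARD('r) \<and> CARD('r) > 1 \<Longrightarrow>
                         (\<forall>X. local_min_P f X \<longrightarrow> \<not> has_zero_row X)"
    and Xs: "local_min_P f Xs"
  shows
    "((CARD('n) = CARD('r) \<or> (CARD('n) > CARD('r) \<and> CARD('r) = 1)) \<longrightarrow>
       (\<forall>\<kappa>'>0. (\<forall>Z::real^'r^'n\<in>Stiefel. infdist Z nonneg_Stiefel \<le> \<kappa>' * infdist Z nonneg_mats) \<longrightarrow>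
          (\<exists>\<delta>>0. \<forall>X\<in>Stiefel. norm (X - Xs) \<le> \<delta> \<longrightarrow>
              f X - f Xs + \<kappa>' * L * vartheta X \<ge> 0)
          \<and> (\<forall>\<rho>\<ge>\<kappa>' * L. local_min_pen f \<rho> Xs)))
   \<and> ((CARD('n) > CARD('r) \<and> CARD('r) > 1) \<longrightarrow>
       (let \<kappa> = (21/10) * sqrt (real CARD('r)) * (1 + 3 * real CARD('r) * (real CARD('n) - real CARD('r)))
                  / min_nonzero_entry Xs in
         (\<exists>\<delta>>0. \<forall>\<epsilon>\<ge>0. \<forall>X. X \<in> Stiefel \<and> vartheta X = \<epsilon> \<and> norm (X - Xs) \<le> \<delta> \<longrightarrow>
              f X - f Xs + \<kappa> * L * vartheta X \<ge> 0)
         \<and> (\<forall>\<rho>\<ge>\<kappa> * L. local_min_pen f \<rho> Xs)))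
   \<and> (\<forall>\<rho>>0. \<forall>X. local_min_pen f \<rho> X \<and> X \<in> nonneg_mats \<longrightarrow> local_min_P f X)"
  proof -
  have p1: "((CARD('n) = CARD('r) \<or> (CARD('n) > CARD('r) \<and> CARD('r) = 1)) \<longrightarrow>
       (\<forall>\<kappa>'>0. (\<forall>Z::real^'r^'n\<in>Stiefel. infdist Z nonneg_Stiefel \<le> \<kappa>' * infdist Z nonneg_mats) \<longrightarrow>
          (\<exists>\<delta>>0. \<forall>X\<in>Stiefel. norm (X - Xs) \<le> \<delta> \<longrightarrow>
              f X - f Xs + \<kappa>' * L * vartheta X \<ge> 0)
          \<and> (\<forall>\<rho>\<ge>\<kappa>' * L. local_min_pen f \<rho> Xs)))"
    using part1[OF Lf Xs] by blast
  have p2: "((CARD('n) > CARD('r) \<and> CARD('r) > 1) \<longrightarrow>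
       (let \<kappa> = (21/10) * sqrt (real CARD('r)) * (1 + 3 * real CARD('r) * (real CARD('n) - real CARD('r)))
                  / min_nonzero_entry Xs in
         (\<exists>\<delta>>0. \<forall>\<epsilon>\<ge>0. \<forall>X. X \<in> Stiefel \<and> vartheta X = \<epsilon> \<and> norm (X - Xs) \<le> \<delta> \<longrightarrow>
              f X - f Xs + \<kappa> * L * vartheta X \<ge> 0)
         \<and> (\<forall>\<rho>\<ge>\<kappa> * L. local_min_pen f \<rho> Xs)))"
  proof
    assume c: "CARD('n) > CARD('r) \<and> CARD('r) > 1"
    have "\<not> has_zero_row Xs" using no_zero_rows[OF c] Xs by blast
    then show "let \<kappa> = (21/10) * sqrt (real CARD('r)) * (1 + 3 * real CARD('r) * (real CARD('n) - real CARD('r)))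
                  / min_nonzero_entry Xs in
         (\<exists>\<delta>>0. \<forall>\<epsilon>\<ge>0. \<forall>X. X \<in> Stiefel \<and> vartheta X = \<epsilon> \<and> norm (X - Xs) \<le> \<delta> \<longrightarrow>
              f X - f Xs + \<kappa> * L * vartheta X \<ge> 0)
         \<and> (\<forall>\<rho>\<ge>\<kappa> * L. local_min_pen f \<rho> Xs)"
      using part2[OF Lf Xs] c by blast
  qed
  have p3: "\<forall>\<rho>>0. \<forall>X. local_min_pen f \<rho> X \<and> X \<in> nonneg_mats \<longrightarrow> local_min_P f X"
    using part3 by blast
  show ?thesis using p1 p2 p3 by blast
qed

end
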